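(* Let $\{R_i\}_{i\in I}$ be a family of commutative rings with identity and $R=\prod_{i\in I}R_i$. The following are equivalent: (1) $R$ is almost complemented and $\mathfrak{N}(R)=\prod_{i\in I}\mathfrak{N}(R_i)$; (2) $R$ is almost complemented and $\mathrm{areg}(R)=\prod_{i\in I}\mathrm{areg}(R_i)$.
   Context: For a ring $A$, $\mathfrak{N}(A)$ is the nilradical, $\mathrm{reg}(A)$ the set of regular elements, and $\mathrm{areg}(A)=\{x\in A: x+\mathfrak{N}(A)\in\mathrm{reg}(A/\mathfrak{N}(A))\}$. $A$ is complemented if for every $a$ there is $b$ with $ab=0$ and $a+b\in\mathrm{reg}(A)$; $A$ is almost complemented if $A/\mathfrak{N}(A)$ is complemented. *)

theory Defs
  imports "HOL-Algebra.QuotRing" "HOL-Library.FuncSet"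
begin

definition nilrad :: "('a, 'b) ring_scheme \<Rightarrow> 'a set" where
  "nilrad A = {x \<in> carrier A. \<exists>n::nat. x [^]\<^bsub>A\<^esub> n = \<zero>\<^bsub>A\<^esub>}"

definition reg :: "('a, 'b) ring_scheme \<Rightarrow> 'a set" where
  "reg A = {x \<in> carrier A. \<forall>y \<in> carrier A. x \<otimes>\<^bsub>A\<^esub> y = \<zero>\<^bsub>A\<^esub> \<longrightarrow> y = \<zero>\<^bsub>A\<^esub>}"

definition areg :: "('a, 'b) ring_scheme \<Rightarrow> 'a set" where
  "areg A = {x \<in> carrier A. (nilrad A +>\<^bsub>A\<^esub> x) \<in> reg (A Quot (nilrad A))}"

definition complemented :: "('a, 'b) ring_scheme \<Rightarrow> bool" where
  "complemented A \<longleftrightarrow> (\<forall>a \<in> carrier A. \<exists>b \<in> carrier A.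
      a \<otimes>\<^bsub>A\<^esub> b = \<zero>\<^bsub>A\<^esub> \<and> a \<oplus>\<^bsub>A\<^esub> b \<in> reg A)"

definition almost_complemented :: "('a, 'b) ring_scheme \<Rightarrow> bool" where
  "almost_complemented A \<longleftrightarrow> complemented (A Quot (nilrad A))"

definition prod_ring :: "'i set \<Rightarrow> ('i \<Rightarrow> ('a, 'b) ring_scheme) \<Rightarrow> ('i \<Rightarrow> 'a) ring" where
  "prod_ring I R = \<lparr>carrier = PiE I (\<lambda>i. carrier (R i)),
     mult = (\<lambda>x y. \<lambda>i\<in>I. x i \<otimes>\<^bsub>R i\<^esub> y i),
     one = (\<lambda>i\<in>I. \<one>\<^bsub>R i\<^esub>),
     zero = (\<lambda>i\<in>I. \<zero>\<^bsub>R i\<^esub>),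
     add = (\<lambda>x y. \<lambda>i\<in>I. x i \<oplus>\<^bsub>R i\<^esub> y i)\<rparr>"

end

theory Submission
  imports Defs
begin

context cring begin

lemma sum_pow_aux:
  assumes x: "x \<in> carrier R" and y: "y \<in> carrier R"
  shows "\<exists>A\<in>carrier R. \<exists>B\<in>carrier R. (x \<oplus> y) [^] ((a::nat) + b) = x [^] a \<otimes> A \<oplus> y [^] (b::nat) \<otimes> B"
proof (induction a arbitrary: b)
  case 0
  show ?case
    by (rule bexI[of _ "(x \<oplus> y) [^] b"], rule bexI[of _ "\<zero>"]) (use x y in auto)
next
  case (Suc a)
  note outer = Suc.IH
  show ?case
  proof (induction b)
    case 0
    show ?case
      by (rule bexI[of _ "\<zero>"], rule bexI[of _ "(x \<oplus> y) [^] Suc a"]) (use x y in auto)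
  next
    case (Suc b)
    from Suc.IH obtain A2 B2 where A2: "A2 \<in> carrier R" and B2: "B2 \<in> carrier R" and
      e2: "(x \<oplus> y) [^] (Suc a + b) = x [^] Suc a \<otimes> A2 \<oplus> y [^] b \<otimes> B2" by blast
    from outer[of "Suc b"] obtain A1 B1 where A1: "A1 \<in> carrier R" and B1: "B1 \<in> carrier R" and
      e1: "(x \<oplus> y) [^] (a + Suc b) = x [^] a \<otimes> A1 \<oplus> y [^] Suc b \<otimes> B1" by blast
    have "(x \<oplus> y) [^] (Suc a + Suc b) = (x \<oplus> y) [^] (a + Suc b) \<otimes> x \<oplus> (x \<oplus> y) [^] (Suc a + b) \<otimes> y"
    proof -
      have "(x \<oplus> y) [^] (Suc a + Suc b) = (x \<oplus> y) [^] (a + Suc b) \<otimes> (x \<oplus> y)" by simp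
      moreover have "(x \<oplus> y) [^] (Suc a + b) = (x \<oplus> y) [^] (a + Suc b)" by simp
      ultimately show ?thesis using x y by (simp add: r_distr)
    qed
    also have "\<dots> = x [^] Suc a \<otimes> (A1 \<oplus> A2 \<otimes> y) \<oplus> y [^] Suc b \<otimes> (B1 \<otimes> x \<oplus> B2)"
    proof -
      have gen: "(p \<otimes> A1 \<oplus> q \<otimes> y \<otimes> B1) \<otimes> x \<oplus> (p \<otimes> x \<otimes> A2 \<oplus> q \<otimes> B2) \<otimes> y = p \<otimes> x \<otimes> (A1 \<oplus> A2 \<otimes> y) \<oplus> q \<otimes> y \<otimes> (B2 \<oplus> B1 \<otimes> x)"
        if "p \<in> carrier R" "q \<in> carrier R" for p q
        using that x y A1 A2 B1 B2 by (simp add: l_distr r_distr m_ac a_ac)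
      show ?thesis unfolding e1 e2 using x y A1 A2 B1 B2 gen[of "x [^] a" "y [^] b"] by (simp add: a_ac)
    qed
    finally show ?case using x y A1 A2 B1 B2 by blast
  qed
qed


lemma nilrad_add:
  assumes "x \<in> nilrad R" "y \<in> nilrad R" shows "x \<oplus> y \<in> nilrad R"
proof -
  obtain n where x: "x \<in> carrier R" and xn: "x [^] (n::nat) = \<zero>" using assms(1) unfolding nilrad_def by blast
  obtain m where y: "y \<in> carrier R" and ym: "y [^] (m::nat) = \<zero>" using assms(2) unfolding nilrad_def by blast
  obtain A B where "A \<in> carrier R" "B \<in> carrier R" "(x \<oplus> y) [^] (n + m) = x [^] n \<otimes> A \<oplus> y [^] m \<otimes> B"
    using sum_pow_aux[OF x y] by blast
  then have "(x \<oplus> y) [^] (n + m) = \<zero>" using xn ym by simp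
  then show ?thesis using x y unfolding nilrad_def by blast
qed

lemma nilrad_mult:
  assumes "a \<in> nilrad R" "x \<in> carrier R" shows "x \<otimes> a \<in> nilrad R"
proof -
  obtain n where a: "a \<in> carrier R" and an: "a [^] (n::nat) = \<zero>" using assms(1) unfolding nilrad_def by blast
  have "(x \<otimes> a) [^] n = x [^] n \<otimes> a [^] n" using a assms(2) by (simp add: nat_pow_distrib)
  also have "\<dots> = \<zero>" using an assms(2) by simp
  finally show ?thesis using a assms(2) unfolding nilrad_def by blast
qed

lemma nilrad_ideal: "ideal (nilrad R) R"
proof (rule idealI)
  show "ring R" by (rule ring_axioms)
  show "subgroup (nilrad R) (add_monoid R)"
  proof (rule add.subgroupI)
    show "nilrad R \<subseteq> carrier R" unfolding nilrad_def by auto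
    have "\<zero> [^] (1::nat) = \<zero>" by simp
    then show "nilrad R \<noteq> {}" unfolding nilrad_def by blast
  next
    fix a assume a: "a \<in> nilrad R"
    then have ac: "a \<in> carrier R" unfolding nilrad_def by blast
    have "(\<ominus> \<one>) \<otimes> a \<in> nilrad R" using nilrad_mult[OF a] by simp
    then show "\<ominus> a \<in> nilrad R" using ac by (simp add: l_minus)
  next
    fix a b assume "a \<in> nilrad R" "b \<in> nilrad R"
    then show "a \<oplus> b \<in> nilrad R" using nilrad_add by simp
  qed
next
  fix a x assume "a \<in> nilrad R" "x \<in> carrier R"
  then show "x \<otimes> a \<in> nilrad R" by (rule nilrad_mult)
next
  fix a x assume "a \<in> nilrad R" "x \<in> carrier R"
  then show "a \<otimes> x \<in> nilrad R" using nilrad_mult[of a x] m_comm[of a x] unfolding nilrad_def by auto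
qed

lemma nil_coset_eq:
  assumes "z \<in> carrier R" shows "(nilrad R +> z = nilrad R) \<longleftrightarrow> z \<in> nilrad R"
  using a_rcos_zero[OF nilrad_ideal] ideal.rcos_const_imp_mem[OF nilrad_ideal assms] by blast

lemma quot_carrier: "carrier (R Quot nilrad R) = {nilrad R +> a | a. a \<in> carrier R}"
  unfolding FactRing_def A_RCOSETS_def' by auto

lemma quot_mul:
  assumes "x \<in> carrier R" "y \<in> carrier R"
  shows "(nilrad R +> x) \<otimes>\<^bsub>R Quot nilrad R\<^esub> (nilrad R +> y) = nilrad R +> (x \<otimes> y)"
  using ideal.rcoset_mult_add[OF nilrad_ideal assms] by (simp add: FactRing_def)

lemma quot_add:
  assumes "x \<in> carrier R" "y \<in> carrier R"
  shows "(nilrad R +> x) \<oplus>\<^bsub>R Quot nilrad R\<^esub> (nilrad R +> y) = nilrad R +> (x \<oplus> y)"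
  using ideal.a_rcos_sum[OF nilrad_ideal assms] by (simp add: FactRing_def)

lemma quot_zero: "\<zero>\<^bsub>R Quot nilrad R\<^esub> = nilrad R" by (simp add: FactRing_def)

lemma areg_iff:
  "x \<in> areg R \<longleftrightarrow> x \<in> carrier R \<and> (\<forall>y\<in>carrier R. x \<otimes> y \<in> nilrad R \<longrightarrow> y \<in> nilrad R)"
proof
  assume x: "x \<in> areg R"
  then have xc: "x \<in> carrier R" and r: "nilrad R +> x \<in> reg (R Quot nilrad R)" unfolding areg_def by auto
  have "y \<in> nilrad R" if y: "y \<in> carrier R" and xy: "x \<otimes> y \<in> nilrad R" for y
  proof -
    have yc: "nilrad R +> y \<in> carrier (R Quot nilrad R)" using y quot_carrier by auto
    have "(nilrad R +> x) \<otimes>\<^bsub>R Quot nilrad R\<^esub> (nilrad R +> y) = \<zero>\<^bsub>R Quot nilrad R\<^esub>"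
      using quot_mul[OF xc y] nil_coset_eq[of "x \<otimes> y"] xy xc y quot_zero by simp
    then have "nilrad R +> y = nilrad R" using r yc unfolding reg_def quot_zero by blast
    then show ?thesis using nil_coset_eq y by blast
  qed
  then show "x \<in> carrier R \<and> (\<forall>y\<in>carrier R. x \<otimes> y \<in> nilrad R \<longrightarrow> y \<in> nilrad R)" using xc by blast
next
  assume h: "x \<in> carrier R \<and> (\<forall>y\<in>carrier R. x \<otimes> y \<in> nilrad R \<longrightarrow> y \<in> nilrad R)"
  then have xc: "x \<in> carrier R" by blast
  have "Y = \<zero>\<^bsub>R Quot nilrad R\<^esub>"
    if Y: "Y \<in> carrier (R Quot nilrad R)" and p: "(nilrad R +> x) \<otimes>\<^bsub>R Quot nilrad R\<^esub> Y = \<zero>\<^bsub>R Quot nilrad R\<^esub>" for Y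
  proof -
    obtain y where y: "y \<in> carrier R" and Yy: "Y = nilrad R +> y" using Y quot_carrier by auto
    have "nilrad R +> (x \<otimes> y) = nilrad R" using p quot_mul[OF xc y] Yy quot_zero by simp
    then have "x \<otimes> y \<in> nilrad R" using nil_coset_eq xc y by blast
    then have "y \<in> nilrad R" using h y by blast
    then show ?thesis using Yy nil_coset_eq y quot_zero by simp
  qed
  moreover have "nilrad R +> x \<in> carrier (R Quot nilrad R)" using xc quot_carrier by auto
  ultimately show "x \<in> areg R" unfolding areg_def reg_def using xc by blast
qed

lemma ac_iff:
  "almost_complemented R \<longleftrightarrow> (\<forall>a\<in>carrier R. \<exists>b\<in>carrier R. a \<otimes> b \<in> nilrad R \<and> a \<oplus> b \<in> areg R)"
proof -
  have ar: "nilrad R +> x \<in> reg (R Quot nilrad R) \<longleftrightarrow> x \<in> areg R" if "x \<in> carrier R" for x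
    using that unfolding areg_def by auto
  have key: "(\<exists>B\<in>carrier (R Quot nilrad R). (nilrad R +> a) \<otimes>\<^bsub>R Quot nilrad R\<^esub> B = \<zero>\<^bsub>R Quot nilrad R\<^esub>
      \<and> (nilrad R +> a) \<oplus>\<^bsub>R Quot nilrad R\<^esub> B \<in> reg (R Quot nilrad R))
    \<longleftrightarrow> (\<exists>b\<in>carrier R. a \<otimes> b \<in> nilrad R \<and> a \<oplus> b \<in> areg R)" if a: "a \<in> carrier R" for a
  proof
    assume "\<exists>B\<in>carrier (R Quot nilrad R). (nilrad R +> a) \<otimes>\<^bsub>R Quot nilrad R\<^esub> B = \<zero>\<^bsub>R Quot nilrad R\<^esub>
      \<and> (nilrad R +> a) \<oplus>\<^bsub>R Quot nilrad R\<^esub> B \<in> reg (R Quot nilrad R)"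
    then obtain B where B: "B \<in> carrier (R Quot nilrad R)" and
      p: "(nilrad R +> a) \<otimes>\<^bsub>R Quot nilrad R\<^esub> B = \<zero>\<^bsub>R Quot nilrad R\<^esub>"
      and s: "(nilrad R +> a) \<oplus>\<^bsub>R Quot nilrad R\<^esub> B \<in> reg (R Quot nilrad R)" by blast
    obtain b where b: "b \<in> carrier R" and Bb: "B = nilrad R +> b" using B quot_carrier by auto
    have "a \<otimes> b \<in> nilrad R" using p quot_mul[OF a b] Bb quot_zero nil_coset_eq[of "a \<otimes> b"] a b by simp
    moreover have "a \<oplus> b \<in> areg R" using s quot_add[OF a b] Bb ar[of "a \<oplus> b"] a b by simp
    ultimately show "\<exists>b\<in>carrier R. a \<otimes> b \<in> nilrad R \<and> a \<oplus> b \<in> areg R" using b by blast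
  next
    assume "\<exists>b\<in>carrier R. a \<otimes> b \<in> nilrad R \<and> a \<oplus> b \<in> areg R"
    then obtain b where b: "b \<in> carrier R" and p: "a \<otimes> b \<in> nilrad R" and s: "a \<oplus> b \<in> areg R" by blast
    have "(nilrad R +> a) \<otimes>\<^bsub>R Quot nilrad R\<^esub> (nilrad R +> b) = \<zero>\<^bsub>R Quot nilrad R\<^esub>"
      using p quot_mul[OF a b] quot_zero nil_coset_eq[of "a \<otimes> b"] a b by simp
    moreover have "(nilrad R +> a) \<oplus>\<^bsub>R Quot nilrad R\<^esub> (nilrad R +> b) \<in> reg (R Quot nilrad R)"
      using s quot_add[OF a b] ar[of "a \<oplus> b"] a b by simp
    moreover have "nilrad R +> b \<in> carrier (R Quot nilrad R)" using b quot_carrier by auto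
    ultimately show "\<exists>B\<in>carrier (R Quot nilrad R). (nilrad R +> a) \<otimes>\<^bsub>R Quot nilrad R\<^esub> B = \<zero>\<^bsub>R Quot nilrad R\<^esub>
      \<and> (nilrad R +> a) \<oplus>\<^bsub>R Quot nilrad R\<^esub> B \<in> reg (R Quot nilrad R)" by blast
  qed
  define \<Phi> where "\<Phi> A \<longleftrightarrow> (\<exists>B\<in>carrier (R Quot nilrad R). A \<otimes>\<^bsub>R Quot nilrad R\<^esub> B = \<zero>\<^bsub>R Quot nilrad R\<^esub>
      \<and> A \<oplus>\<^bsub>R Quot nilrad R\<^esub> B \<in> reg (R Quot nilrad R))" for A
  have "almost_complemented R \<longleftrightarrow> (\<forall>A\<in>carrier (R Quot nilrad R). \<Phi> A)"
    unfolding almost_complemented_def complemented_def \<Phi>_def by (rule refl)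
  also have "\<dots> \<longleftrightarrow> (\<forall>a\<in>carrier R. \<Phi> (nilrad R +> a))"
    unfolding quot_carrier by blast
  also have "\<dots> \<longleftrightarrow> (\<forall>a\<in>carrier R. \<exists>b\<in>carrier R. a \<otimes> b \<in> nilrad R \<and> a \<oplus> b \<in> areg R)"
    using key unfolding \<Phi>_def by (intro ball_cong refl) 
  finally show ?thesis .
qed

end

lemma prod_ring_simps:
  "carrier (prod_ring I R) = PiE I (\<lambda>i. carrier (R i))"
  "x \<otimes>\<^bsub>prod_ring I R\<^esub> y = (\<lambda>i\<in>I. x i \<otimes>\<^bsub>R i\<^esub> y i)"
  "x \<oplus>\<^bsub>prod_ring I R\<^esub> y = (\<lambda>i\<in>I. x i \<oplus>\<^bsub>R i\<^esub> y i)"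
  "\<one>\<^bsub>prod_ring I R\<^esub> = (\<lambda>i\<in>I. \<one>\<^bsub>R i\<^esub>)"
  "\<zero>\<^bsub>prod_ring I R\<^esub> = (\<lambda>i\<in>I. \<zero>\<^bsub>R i\<^esub>)"
  by (simp_all add: prod_ring_def)

lemma prod_cring:
  assumes cr: "\<And>i. i \<in> I \<Longrightarrow> cring (R i)"
  shows "cring (prod_ring I R)"
proof (rule cringI)
  note ring = cr[THEN cring.axioms(1)]
  note rs = prod_ring_simps
  show "abelian_group (prod_ring I R)"
  proof (rule abelian_groupI)
    show "\<And>x y. x \<in> carrier (prod_ring I R) \<Longrightarrow> y \<in> carrier (prod_ring I R) \<Longrightarrow>
       x \<oplus>\<^bsub>prod_ring I R\<^esub> y \<in> carrier (prod_ring I R)"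
      unfolding rs by (auto simp: PiE_iff intro: ring.ring_simprules ring)
    show "\<zero>\<^bsub>prod_ring I R\<^esub> \<in> carrier (prod_ring I R)"
      unfolding rs by (auto simp: PiE_iff intro: ring.ring_simprules ring)
    show "\<And>x y z. x \<in> carrier (prod_ring I R) \<Longrightarrow> y \<in> carrier (prod_ring I R) \<Longrightarrow> z \<in> carrier (prod_ring I R) \<Longrightarrow>
       x \<oplus>\<^bsub>prod_ring I R\<^esub> y \<oplus>\<^bsub>prod_ring I R\<^esub> z = x \<oplus>\<^bsub>prod_ring I R\<^esub> (y \<oplus>\<^bsub>prod_ring I R\<^esub> z)"
      unfolding rs by (auto simp: PiE_iff ring.ring_simprules ring)
    show "\<And>x y. x \<in> carrier (prod_ring I R) \<Longrightarrow> y \<in> carrier (prod_ring I R) \<Longrightarrow>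
       x \<oplus>\<^bsub>prod_ring I R\<^esub> y = y \<oplus>\<^bsub>prod_ring I R\<^esub> x"
      unfolding rs by (auto simp: PiE_iff ring.ring_simprules ring intro!: restrict_ext)
    show "\<zero>\<^bsub>prod_ring I R\<^esub> \<oplus>\<^bsub>prod_ring I R\<^esub> x = x" if x: "x \<in> carrier (prod_ring I R)" for x
    proof (rule ext)
      fix i show "(\<zero>\<^bsub>prod_ring I R\<^esub> \<oplus>\<^bsub>prod_ring I R\<^esub> x) i = x i"
        using x by (cases "i \<in> I") (auto simp: rs PiE_iff ring.ring_simprules ring extensional_def)
    qed
    show "\<And>x. x \<in> carrier (prod_ring I R) \<Longrightarrow> \<exists>y\<in>carrier (prod_ring I R). y \<oplus>\<^bsub>prod_ring I R\<^esub> x = \<zero>\<^bsub>prod_ring I R\<^esub>"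
    proof -
      fix x assume x: "x \<in> carrier (prod_ring I R)"
      show "\<exists>y\<in>carrier (prod_ring I R). y \<oplus>\<^bsub>prod_ring I R\<^esub> x = \<zero>\<^bsub>prod_ring I R\<^esub>"
        by (rule bexI[of _ "\<lambda>i\<in>I. \<ominus>\<^bsub>R i\<^esub> x i"]) (use x in \<open>auto simp: rs PiE_iff ring.ring_simprules ring\<close>)
    qed
  qed
  show "comm_monoid (prod_ring I R)"
  proof (rule comm_monoidI)
    show "\<And>x y. x \<in> carrier (prod_ring I R) \<Longrightarrow> y \<in> carrier (prod_ring I R) \<Longrightarrow>
       x \<otimes>\<^bsub>prod_ring I R\<^esub> y \<in> carrier (prod_ring I R)"
      unfolding rs by (auto simp: PiE_iff intro: ring.ring_simprules ring)
    show "\<one>\<^bsub>prod_ring I R\<^esub> \<in> carrier (prod_ring I R)"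
      unfolding rs by (auto simp: PiE_iff intro: ring.ring_simprules ring)
    show "\<And>x y z. x \<in> carrier (prod_ring I R) \<Longrightarrow> y \<in> carrier (prod_ring I R) \<Longrightarrow> z \<in> carrier (prod_ring I R) \<Longrightarrow>
       x \<otimes>\<^bsub>prod_ring I R\<^esub> y \<otimes>\<^bsub>prod_ring I R\<^esub> z = x \<otimes>\<^bsub>prod_ring I R\<^esub> (y \<otimes>\<^bsub>prod_ring I R\<^esub> z)"
      unfolding rs by (auto simp: PiE_iff ring.ring_simprules ring)
    show "\<And>x y. x \<in> carrier (prod_ring I R) \<Longrightarrow> y \<in> carrier (prod_ring I R) \<Longrightarrow>
       x \<otimes>\<^bsub>prod_ring I R\<^esub> y = y \<otimes>\<^bsub>prod_ring I R\<^esub> x"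
      unfolding rs by (auto simp: PiE_iff cr cring.cring_simprules intro!: restrict_ext)
    show "\<one>\<^bsub>prod_ring I R\<^esub> \<otimes>\<^bsub>prod_ring I R\<^esub> x = x" if x: "x \<in> carrier (prod_ring I R)" for x
    proof (rule ext)
      fix i show "(\<one>\<^bsub>prod_ring I R\<^esub> \<otimes>\<^bsub>prod_ring I R\<^esub> x) i = x i"
        using x by (cases "i \<in> I") (auto simp: rs PiE_iff ring.ring_simprules ring extensional_def)
    qed
  qed
  show "\<And>x y z. x \<in> carrier (prod_ring I R) \<Longrightarrow> y \<in> carrier (prod_ring I R) \<Longrightarrow> z \<in> carrier (prod_ring I R) \<Longrightarrow>
       (x \<oplus>\<^bsub>prod_ring I R\<^esub> y) \<otimes>\<^bsub>prod_ring I R\<^esub> z = x \<otimes>\<^bsub>prod_ring I R\<^esub> z \<oplus>\<^bsub>prod_ring I R\<^esub> y \<otimes>\<^bsub>prod_ring I R\<^esub> z"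
    unfolding rs by (auto simp: PiE_iff ring.ring_simprules ring intro!: restrict_ext)
qed

lemma prod_pow:
  "x [^]\<^bsub>prod_ring I R\<^esub> (n::nat) = (\<lambda>i\<in>I. x i [^]\<^bsub>R i\<^esub> n)"
  by (induction n) (auto simp: prod_ring_simps intro!: restrict_ext)


theorem mainTheorem10:
  fixes I :: "'i set" and R :: "'i \<Rightarrow> ('a, 'b) ring_scheme"
  assumes "\<And>i. i \<in> I \<Longrightarrow> cring (R i)"
  shows "(almost_complemented (prod_ring I R) \<and>
            nilrad (prod_ring I R) = (\<Pi>\<^sub>E i\<in>I. nilrad (R i)))
     \<longleftrightarrow> (almost_complemented (prod_ring I R) \<and>
            areg (prod_ring I R) = (\<Pi>\<^sub>E i\<in>I. areg (R i)))"
proof -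
  let ?P = "prod_ring I R"
  have cR: "\<And>i. i \<in> I \<Longrightarrow> cring (R i)" by fact
  have cP: "cring ?P" by (rule prod_cring) (rule cR)
  note rs = prod_ring_simps
  have Nc: "\<And>i. nilrad (R i) \<subseteq> carrier (R i)" unfolding nilrad_def by auto
  have ac: "\<And>i. areg (R i) \<subseteq> carrier (R i)" unfolding areg_def by auto
  have N_sub: "nilrad ?P \<subseteq> (\<Pi>\<^sub>E i\<in>I. nilrad (R i))"
  proof
    fix x assume "x \<in> nilrad ?P"
    then obtain n where x: "x \<in> carrier ?P" and xn: "x [^]\<^bsub>?P\<^esub> (n::nat) = \<zero>\<^bsub>?P\<^esub>"
      unfolding nilrad_def by blast
    have "x i \<in> nilrad (R i)" if i: "i \<in> I" for i
    proof -
      have "x i [^]\<^bsub>R i\<^esub> n = \<zero>\<^bsub>R i\<^esub>" using fun_cong[OF xn, of i] i by (simp add: prod_pow rs)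
      then show ?thesis using x i unfolding nilrad_def by (auto simp: rs PiE_iff)
    qed
    then show "x \<in> (\<Pi>\<^sub>E i\<in>I. nilrad (R i))" using x by (auto simp: rs PiE_iff)
  qed
  show ?thesis
  proof
    assume h: "almost_complemented ?P \<and> nilrad ?P = (\<Pi>\<^sub>E i\<in>I. nilrad (R i))"
    have "areg ?P = (\<Pi>\<^sub>E i\<in>I. areg (R i))"
    proof (intro equalityI subsetI)
      fix x assume "x \<in> areg ?P"
      then have x: "x \<in> carrier ?P" and hx: "\<forall>y\<in>carrier ?P. x \<otimes>\<^bsub>?P\<^esub> y \<in> nilrad ?P \<longrightarrow> y \<in> nilrad ?P"
        using cring.areg_iff[OF cP] by auto
      have "x i \<in> areg (R i)" if i: "i \<in> I" for i
      proof -
        interpret Ri: cring "R i" using cR i .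
        have "y \<in> nilrad (R i)" if y: "y \<in> carrier (R i)" and xy: "x i \<otimes>\<^bsub>R i\<^esub> y \<in> nilrad (R i)" for y
        proof -
          define Y where "Y = (\<lambda>j\<in>I. if j = i then y else \<zero>\<^bsub>R j\<^esub>)"
          have Yc: "Y \<in> carrier ?P" using y cR by (auto simp: Y_def rs PiE_iff cring.cring_simprules)
          have "x \<otimes>\<^bsub>?P\<^esub> Y \<in> (\<Pi>\<^sub>E j\<in>I. nilrad (R j))"
          proof -
            have "x j \<otimes>\<^bsub>R j\<^esub> Y j \<in> nilrad (R j)" if j: "j \<in> I" for j
            proof (cases "j = i")
              case True then show ?thesis using xy j by (simp add: Y_def)
            next
              case False
              interpret Rj: cring "R j" using cR j .
              have "x j \<in> carrier (R j)" using x j by (auto simp: rs PiE_iff)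
              then have "x j \<otimes>\<^bsub>R j\<^esub> Y j = \<zero>\<^bsub>R j\<^esub>" using False j by (simp add: Y_def)
              moreover have "\<zero>\<^bsub>R j\<^esub> \<in> nilrad (R j)"
                using additive_subgroup.zero_closed[OF ideal.axioms(1)[OF Rj.nilrad_ideal]] by simp
              ultimately show ?thesis by simp
            qed
            then show ?thesis by (auto simp: rs PiE_iff)
          qed
          then have "Y \<in> (\<Pi>\<^sub>E j\<in>I. nilrad (R j))" using hx Yc h by auto
          then show ?thesis using i by (auto simp: Y_def PiE_iff)
        qed
        then show ?thesis using x i Ri.areg_iff by (auto simp: rs PiE_iff)
      qed
      then show "x \<in> (\<Pi>\<^sub>E i\<in>I. areg (R i))" using x by (auto simp: rs PiE_iff)
    next
      fix x assume x: "x \<in> (\<Pi>\<^sub>E i\<in>I. areg (R i))"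
      have xc: "x \<in> carrier ?P" using x ac by (auto simp: rs PiE_iff)
      have "y \<in> nilrad ?P" if y: "y \<in> carrier ?P" and xy: "x \<otimes>\<^bsub>?P\<^esub> y \<in> nilrad ?P" for y
      proof -
        have "y i \<in> nilrad (R i)" if i: "i \<in> I" for i
        proof -
          have "x i \<otimes>\<^bsub>R i\<^esub> y i \<in> nilrad (R i)" using xy h i by (auto simp: rs PiE_iff)
          moreover have "x i \<in> areg (R i)" "y i \<in> carrier (R i)" using x y i by (auto simp: rs PiE_iff)
          ultimately show ?thesis using cring.areg_iff[OF cR[OF i]] by blast
        qed
        then show ?thesis using y h by (auto simp: rs PiE_iff)
      qed
      then show "x \<in> areg ?P" using cring.areg_iff[OF cP] xc by blast
    qed
    then show "almost_complemented ?P \<and> areg ?P = (\<Pi>\<^sub>E i\<in>I. areg (R i))" using h by blast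
  next
    assume h: "almost_complemented ?P \<and> areg ?P = (\<Pi>\<^sub>E i\<in>I. areg (R i))"
    have "(\<Pi>\<^sub>E i\<in>I. nilrad (R i)) \<subseteq> nilrad ?P"
    proof
      fix x assume x: "x \<in> (\<Pi>\<^sub>E i\<in>I. nilrad (R i))"
      have xc: "x \<in> carrier ?P" using x Nc by (auto simp: rs PiE_iff)
      have "\<forall>a\<in>carrier ?P. \<exists>b\<in>carrier ?P. a \<otimes>\<^bsub>?P\<^esub> b \<in> nilrad ?P \<and> a \<oplus>\<^bsub>?P\<^esub> b \<in> areg ?P"
        by (rule iffD1[OF cring.ac_iff[OF cP] conjunct1[OF h]])
      from bspec[OF this xc] obtain b where b: "b \<in> carrier ?P" and xb: "x \<otimes>\<^bsub>?P\<^esub> b \<in> nilrad ?P"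
        and s: "x \<oplus>\<^bsub>?P\<^esub> b \<in> areg ?P" by blast
      have "b i \<in> areg (R i)" if i: "i \<in> I" for i
      proof -
        interpret Ri: cring "R i" using cR i .
        have xi: "x i \<in> nilrad (R i)" using x i by auto
        have bi: "b i \<in> carrier (R i)" using b i by (auto simp: rs PiE_iff)
        have si: "x i \<oplus>\<^bsub>R i\<^esub> b i \<in> areg (R i)" using s h i by (auto simp: rs PiE_iff)
        have "y \<in> nilrad (R i)" if y: "y \<in> carrier (R i)" and hby: "b i \<otimes>\<^bsub>R i\<^esub> y \<in> nilrad (R i)" for y
        proof -
          have xic: "x i \<in> carrier (R i)" using xi Nc by auto
          have "y \<otimes>\<^bsub>R i\<^esub> x i \<in> nilrad (R i)" using Ri.nilrad_mult[OF xi y] .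
          then have "x i \<otimes>\<^bsub>R i\<^esub> y \<in> nilrad (R i)" using Ri.m_comm[OF xic y] by simp
          then have "x i \<otimes>\<^bsub>R i\<^esub> y \<oplus>\<^bsub>R i\<^esub> b i \<otimes>\<^bsub>R i\<^esub> y \<in> nilrad (R i)" using Ri.nilrad_add[OF _ hby] by blast
          then have "(x i \<oplus>\<^bsub>R i\<^esub> b i) \<otimes>\<^bsub>R i\<^esub> y \<in> nilrad (R i)" using Ri.l_distr[OF xic bi y] by simp
          moreover have "\<forall>y\<in>carrier (R i). (x i \<oplus>\<^bsub>R i\<^esub> b i) \<otimes>\<^bsub>R i\<^esub> y \<in> nilrad (R i) \<longrightarrow> y \<in> nilrad (R i)"
            using conjunct2[OF iffD1[OF Ri.areg_iff si]] .
          ultimately show ?thesis using y by blast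
        qed
        then show ?thesis by (intro iffD2[OF Ri.areg_iff] conjI bi ballI impI)
      qed
      then have "b \<in> areg ?P" using h b by (auto simp: rs PiE_iff)
      moreover have "b \<otimes>\<^bsub>?P\<^esub> x \<in> nilrad ?P"
        using xb comm_monoid.m_comm[OF cring.axioms(2)[OF cP] b xc] by simp
      ultimately show "x \<in> nilrad ?P" using iffD1[OF cring.areg_iff[OF cP, of b]] xc by blast
    qed
    then show "almost_complemented ?P \<and> nilrad ?P = (\<Pi>\<^sub>E i\<in>I. nilrad (R i))" using h N_sub by blast
  qed
qed

end
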